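(* Let $1\le d$ and $n\ge d+2$ be integers, let $I\subseteq[n]$ with $|I|=d+1$, and let $A_I\subseteq V(P(d,n))$ be the set of $d$-tuples with pairwise distinct entries from $I$. Then the induced subgraph $P(d,n)[A_I]$ is isomorphic to $P(d,d+1)$ (hence bipartite), and for every maximal clique $K$ of $P(d,n)$, $|V(K)\cap A_I|\in\{0,2\}$.
   Context: For integers $1\le d\le n$, the partial permutation graph $P(d,n)$ has as vertices all $d$-tuples with pairwise distinct entries from $[n]=\{1,\dots,n\}$, two being adjacent iff they differ in exactly one coordinate. *)

theory Defs
  imports Main
begin

definition ppg_vertices :: "nat \<Rightarrow> nat \<Rightarrow> nat list set" where
  "ppg_vertices d n = {xs. length xs = d \<and> distinct xs \<and> set xs \<subseteq> {1..n}}"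

definition ppg_adj :: "nat list \<Rightarrow> nat list \<Rightarrow> bool" where
  "ppg_adj xs ys \<longleftrightarrow> length xs = length ys \<and> card {i. i < length xs \<and> xs ! i \<noteq> ys ! i} = 1"

definition graph_iso :: "'a set \<Rightarrow> ('a \<Rightarrow> 'a \<Rightarrow> bool) \<Rightarrow> 'b set \<Rightarrow> ('b \<Rightarrow> 'b \<Rightarrow> bool) \<Rightarrow> bool" where
  "graph_iso V E W F \<longleftrightarrow> (\<exists>f. bij_betw f V W \<and> (\<forall>u\<in>V. \<forall>v\<in>V. E u v \<longleftrightarrow> F (f u) (f v)))"

definition bipartite :: "'a set \<Rightarrow> ('a \<Rightarrow> 'a \<Rightarrow> bool) \<Rightarrow> bool" where
  "bipartite V E \<longleftrightarrow> (\<exists>c :: 'a \<Rightarrow> bool. \<forall>u\<in>V. \<forall>v\<in>V. E u v \<longrightarrow> c u \<noteq> c v)"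

definition is_clique :: "'a set \<Rightarrow> ('a \<Rightarrow> 'a \<Rightarrow> bool) \<Rightarrow> 'a set \<Rightarrow> bool" where
  "is_clique V E K \<longleftrightarrow> K \<subseteq> V \<and> (\<forall>u\<in>K. \<forall>v\<in>K. u \<noteq> v \<longrightarrow> E u v)"

definition is_maximal_clique :: "'a set \<Rightarrow> ('a \<Rightarrow> 'a \<Rightarrow> bool) \<Rightarrow> 'a set \<Rightarrow> bool" where
  "is_maximal_clique V E K \<longleftrightarrow> is_clique V E K \<and> (\<forall>K'. is_clique V E K' \<and> K \<subseteq> K' \<longrightarrow> K' = K)"

end

theory Submission
  imports Defs "HOL-Combinatorics.Permutations"
begin

lemma adj_iff: "ppg_adj u v \<longleftrightarrow> length u = length v \<and>
   (\<exists>i<length u. u!i \<noteq> v!i \<and> (\<forall>j<length u. j \<noteq> i \<longrightarrow> u!j = v!j))"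
proof
  assume "ppg_adj u v"
  then obtain i where L: "length u = length v" and S: "{i. i < length u \<and> u ! i \<noteq> v ! i} = {i}"
    unfolding ppg_adj_def by (auto simp: card_1_singleton_iff)
  then show "length u = length v \<and>
   (\<exists>i<length u. u!i \<noteq> v!i \<and> (\<forall>j<length u. j \<noteq> i \<longrightarrow> u!j = v!j))"
  proof -
    have i: "i < length u" "u!i \<noteq> v!i" using S by blast+
    have "\<forall>j<length u. j \<noteq> i \<longrightarrow> u!j = v!j"
    proof (intro allI impI)
      fix j assume "j < length u" "j \<noteq> i"
      then have "j \<notin> {i. i < length u \<and> u ! i \<noteq> v ! i}" using S by simp
      then show "u!j = v!j" using \<open>j < length u\<close> by simp
    qed
    then show ?thesis using i L by blast
  qed
next
  assume "length u = length v \<and>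
   (\<exists>i<length u. u!i \<noteq> v!i \<and> (\<forall>j<length u. j \<noteq> i \<longrightarrow> u!j = v!j))"
  then obtain i where "length u = length v" "i<length u" "u!i \<noteq> v!i" "\<forall>j<length u. j \<noteq> i \<longrightarrow> u!j = v!j"
    by blast
  then have "{i. i < length u \<and> u ! i \<noteq> v ! i} = {i}" by auto
  then show "ppg_adj u v" unfolding ppg_adj_def using \<open>length u = length v\<close> by simp
qed

definition line :: "nat \<Rightarrow> nat \<Rightarrow> nat list \<Rightarrow> nat \<Rightarrow> nat list set" where
  "line d n v i = {w \<in> ppg_vertices d n. \<forall>j<d. j \<noteq> i \<longrightarrow> w!j = v!j}"

lemma line_clique:
  assumes "i < d"
  shows "is_clique (ppg_vertices d n) ppg_adj (line d n v i)"
  unfolding is_clique_def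
proof safe
  fix x assume "x \<in> line d n v i" then show "x \<in> ppg_vertices d n" by (simp add: line_def)
next
  fix u w assume u: "u \<in> line d n v i" and w: "w \<in> line d n v i" and ne: "u \<noteq> w"
  have lu: "length u = d" "length w = d" using u w by (auto simp: line_def ppg_vertices_def)
  have ag: "\<forall>j<d. j \<noteq> i \<longrightarrow> u!j = w!j" using u w by (auto simp: line_def)
  have "u!i \<noteq> w!i"
  proof
    assume "u!i = w!i"
    then have "u = w" using lu ag by (metis nth_equalityI)
    then show False using ne by simp
  qed
  then show "ppg_adj u w" unfolding adj_iff using lu ag assms by auto
qed

lemma maxclique_line:
  assumes d: "1 \<le> d" and n: "d \<le> n"
    and K: "is_maximal_clique (ppg_vertices d n) ppg_adj K"
  shows "\<exists>v\<in>ppg_vertices d n. \<exists>i<d. K = line d n v i"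
proof -
  let ?V = "ppg_vertices d n"
  have cl: "is_clique ?V ppg_adj K" and mx: "\<And>K'. is_clique ?V ppg_adj K' \<Longrightarrow> K \<subseteq> K' \<Longrightarrow> K' = K"
    using K unfolding is_maximal_clique_def by auto
  have KV: "K \<subseteq> ?V" using cl by (simp add: is_clique_def)
  have "[1..<d+1] \<in> ?V" using n by (auto simp: ppg_vertices_def)
  then have "K \<noteq> {}"
  proof -
    have "is_clique ?V ppg_adj {[1..<d+1]}" using \<open>[1..<d+1] \<in> ?V\<close> by (simp add: is_clique_def)
    then show ?thesis using mx[of "{[1..<d+1]}"] by auto
  qed
  then obtain v where vK: "v \<in> K" by blast
  have vV: "v \<in> ?V" using vK KV by auto
  have vl: "\<And>i. v \<in> line d n v i" using vV by (simp add: line_def)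
  show ?thesis
  proof (cases "\<exists>u\<in>K. u \<noteq> v")
    case False
    then have "K = {v}" using vK by blast
    then have "K \<subseteq> line d n v 0" using vl[of 0] by simp
    then have "line d n v 0 = K" using mx[OF line_clique[of 0 d n v]] d by simp
    then have "K = line d n v 0" by simp
    moreover have "0 < d" using d by simp
    ultimately show ?thesis using vV by blast
  next
    case True
    then obtain u where uK: "u \<in> K" and uv: "u \<noteq> v" by blast
    have "ppg_adj v u" using cl uK vK uv by (auto simp: is_clique_def)
    then obtain i where lv: "length v = length u" and i: "i < length v" "v!i \<noteq> u!i"
      and ag: "\<forall>j<length v. j \<noteq> i \<longrightarrow> v!j = u!j" unfolding adj_iff by blast
    have lvd: "length v = d" using vV by (simp add: ppg_vertices_def)
    have "K \<subseteq> line d n v i"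
    proof
      fix w assume wK: "w \<in> K"
      have wV: "w \<in> ?V" using wK KV by auto
      show "w \<in> line d n v i"
      proof (cases "w = v")
        case True then show ?thesis using vl by simp
      next
        case False
        have "ppg_adj v w" using cl wK vK False by (auto simp: is_clique_def)
        then obtain j where lw: "length v = length w" and j: "j < length v" "v!j \<noteq> w!j"
          and agw: "\<forall>k<length v. k \<noteq> j \<longrightarrow> v!k = w!k" unfolding adj_iff by blast
        have "j = i"
        proof (rule ccontr)
          assume ji: "j \<noteq> i"
          have "v!j = u!j" using ag j ji by simp
          then have "w \<noteq> u" using j by auto
          then have "ppg_adj u w" using cl wK uK by (auto simp: is_clique_def)
          then obtain l where "l < length u" and "u!l \<noteq> w!l"
            and agl: "\<forall>k<length u. k \<noteq> l \<longrightarrow> u!k = w!k" unfolding adj_iff by blast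
          have "u!i \<noteq> w!i" using i agw ji by auto
          then have "l = i" using agl i lv by auto
          have "u!j \<noteq> w!j" using j ag ji by auto
          then have "l = j" using agl j lv by auto
          then show False using \<open>l = i\<close> ji by simp
        qed
        then show ?thesis using wV agw lvd by (auto simp: line_def)
      qed
    qed
    then have "line d n v i = K" using mx[OF line_clique[of i d n v]] i lvd by simp
    then have "K = line d n v i" by simp
    moreover have "i < d" using i lvd by simp
    ultimately show ?thesis using vV by blast
  qed
qed

lemma line_card:
  assumes v: "v \<in> ppg_vertices d n" and i: "i < d" and d: "1 \<le> d"
    and I: "I \<subseteq> {1..n}" and cI: "card I = d + 1"
  shows "card (line d n v i \<inter> {xs \<in> ppg_vertices d n. set xs \<subseteq> I}) \<in> {0, 2}"
proof -
  define W where "W = set v - {v!i}"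
  have lv: "length v = d" and dv: "distinct v" and sv: "set v \<subseteq> {1..n}"
    using v by (auto simp: ppg_vertices_def)
  have finI: "finite I" using I finite_subset by blast
  have cW: "card W = d - 1"
  proof -
    have "card (set v) = d" using distinct_card[OF dv] lv by simp
    moreover have "v!i \<in> set v" using i lv by simp
    ultimately show ?thesis unfolding W_def by (simp add: card_Diff_singleton)
  qed
  have Wnth: "\<And>x. x \<in> W \<Longrightarrow> \<exists>k<d. k \<noteq> i \<and> v!k = x"
    unfolding W_def using lv by (auto simp: in_set_conv_nth)
  have lineE: "\<And>w. w \<in> line d n v i \<Longrightarrow> w = v[i := w!i] \<and> w!i \<notin> W \<and> w \<in> ppg_vertices d n"
  proof -
    fix w assume w: "w \<in> line d n v i"
    have wV: "w \<in> ppg_vertices d n" and ag: "\<forall>j<d. j \<noteq> i \<longrightarrow> w!j = v!j"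
      using w by (auto simp: line_def)
    have lw: "length w = d" and dw: "distinct w" using wV by (auto simp: ppg_vertices_def)
    have "w = v[i := w!i]"
    proof (rule nth_equalityI)
      show "length w = length (v[i := w!i])" using lw lv by simp
      fix k assume k: "k < length w"
      show "w!k = v[i := w!i] ! k"
      proof (cases "k = i")
        case True then show ?thesis using k lv lw by simp
      next
        case False then show ?thesis using k lw ag by simp
      qed
    qed
    moreover have "w!i \<notin> W"
    proof
      assume "w!i \<in> W"
      then obtain k where k: "k<d" "k \<noteq> i" "v!k = w!i" using Wnth by blast
      then have "w!k = w!i" using ag by simp
      then show False using dw k i lw by (simp add: nth_eq_iff_index_eq)
    qed
    ultimately show "w = v[i := w!i] \<and> w!i \<notin> W \<and> w \<in> ppg_vertices d n" using wV by blast
  qed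
  let ?A = "{xs \<in> ppg_vertices d n. set xs \<subseteq> I}"
  show ?thesis
  proof (cases "W \<subseteq> I")
    case True
    have eq: "line d n v i \<inter> ?A = (\<lambda>b. v[i := b]) ` (I - W)"
    proof
      show "line d n v i \<inter> ?A \<subseteq> (\<lambda>b. v[i := b]) ` (I - W)"
      proof
        fix w assume w: "w \<in> line d n v i \<inter> ?A"
        then have e: "w = v[i := w!i] \<and> w!i \<notin> W" using lineE by blast
        have "length w = d" using w by (auto simp: ppg_vertices_def)
        then have "w!i \<in> set w" using i by simp
        then have "w!i \<in> I" using w by auto
        then show "w \<in> (\<lambda>b. v[i := b]) ` (I - W)" using e by blast
      qed
    next
      show "(\<lambda>b. v[i := b]) ` (I - W) \<subseteq> line d n v i \<inter> ?A"
      proof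
        fix w assume "w \<in> (\<lambda>b. v[i := b]) ` (I - W)"
        then obtain b where b: "b \<in> I" "b \<notin> W" and wb: "w = v[i := b]" by blast
        have sw: "set w = insert b W" unfolding wb W_def
          using set_update_distinct[OF dv, of i b] i lv by simp
        have "distinct w" unfolding wb using distinct_list_update[OF dv, of b i] b W_def by simp
        moreover have "length w = d" using wb lv by simp
        moreover have "set w \<subseteq> I" using sw b True by simp
        ultimately have "w \<in> ?A" using I by (auto simp: ppg_vertices_def)
        moreover have "\<forall>j<d. j \<noteq> i \<longrightarrow> w!j = v!j" using wb by simp
        ultimately show "w \<in> line d n v i \<inter> ?A" by (simp add: line_def)
      qed
    qed
    have inj: "inj_on (\<lambda>b. v[i := b]) (I - W)"
    proof (rule inj_onI)
      fix a b assume "v[i := a] = v[i := b]"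
      then have "v[i := a] ! i = v[i := b] ! i" by simp
      then show "a = b" using i lv by simp
    qed
    have "card (I - W) = 2"
      using card_Diff_subset[OF finite_subset[OF True finI] True] cI cW d by simp
    then have "card (line d n v i \<inter> ?A) = 2" unfolding eq card_image[OF inj] .
    then show ?thesis by simp
  next
    case False
    then obtain x where x: "x \<in> W" "x \<notin> I" by blast
    then obtain k where k: "k<d" "k \<noteq> i" "v!k = x" using Wnth by blast
    have "line d n v i \<inter> ?A = {}"
    proof (rule ccontr)
      assume "line d n v i \<inter> ?A \<noteq> {}"
      then obtain w where w: "w \<in> line d n v i" "set w \<subseteq> I" by blast
      have "w!k = x" using w(1) k by (simp add: line_def)
      moreover have "length w = d" using w(1) by (simp add: line_def ppg_vertices_def)
      ultimately have "x \<in> set w" using k by (metis nth_mem)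
      then show False using w x by blast
    qed
    then show ?thesis by simp
  qed
qed

lemma iso_part:
  assumes I: "I \<subseteq> {1..n}" and cI: "card I = d + 1"
  shows "graph_iso {xs \<in> ppg_vertices d n. set xs \<subseteq> I} ppg_adj (ppg_vertices d (d + 1)) ppg_adj"
proof -
  let ?A = "{xs \<in> ppg_vertices d n. set xs \<subseteq> I}"
  let ?B = "ppg_vertices d (d + 1)"
  have finI: "finite I" using I finite_subset by blast
  obtain g where g: "bij_betw g {1..d+1} I" using ex_bij_betw_nat_finite_1[OF finI] cI by auto
  define h where "h = the_inv_into {1..d+1} g"
  have h: "bij_betw h I {1..d+1}" unfolding h_def by (rule bij_betw_the_inv_into[OF g])
  have injg: "inj_on g {1..d+1}" by (rule bij_betw_imp_inj_on[OF g])
  have injh: "inj_on h I" by (rule bij_betw_imp_inj_on[OF h])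
  have gimg: "g ` {1..d+1} = I" by (rule bij_betw_imp_surj_on[OF g])
  have gh: "\<And>x. x \<in> I \<Longrightarrow> g (h x) = x" unfolding h_def
    by (rule f_the_inv_into_f[OF injg]) (use gimg in auto)
  have hg: "\<And>y. y \<in> {1..d+1} \<Longrightarrow> h (g y) = y" unfolding h_def
    by (rule the_inv_into_f_f[OF injg])
  have hI: "\<And>x. x \<in> I \<Longrightarrow> h x \<in> {1..d+1}" by (rule bij_betw_apply[OF h])
  have gI: "\<And>y. y \<in> {1..d+1} \<Longrightarrow> g y \<in> I" by (rule bij_betw_apply[OF g])
  have bij: "bij_betw (map h) ?A ?B"
  proof (rule bij_betw_byWitness[where f' = "map g"])
    show "\<forall>a\<in>?A. map g (map h a) = a"
      by (auto intro!: map_idI simp: gh)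
    show "\<forall>a\<in>?B. map h (map g a) = a"
      by (auto intro!: map_idI simp: hg ppg_vertices_def)
    show "map h ` ?A \<subseteq> ?B"
    proof
      fix y assume "y \<in> map h ` ?A"
      then obtain x where x: "x \<in> ?A" and y: "y = map h x" by blast
      have "distinct y" unfolding y using x
        by (auto simp: ppg_vertices_def distinct_map intro: inj_on_subset[OF injh, of "set x"])
      moreover have "set y \<subseteq> {1..d+1}" unfolding y using x hI by auto
      ultimately show "y \<in> ?B" using x y by (auto simp: ppg_vertices_def)
    qed
    show "map g ` ?B \<subseteq> ?A"
    proof
      fix y assume "y \<in> map g ` ?B"
      then obtain x where x: "x \<in> ?B" and y: "y = map g x" by blast
      have sx: "set x \<subseteq> {1..d+1}" "distinct x" using x by (auto simp: ppg_vertices_def)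
      have "distinct y" unfolding y distinct_map using sx inj_on_subset[OF injg sx(1)] by simp
      moreover have "set y \<subseteq> I" unfolding y using x gI by (auto simp: ppg_vertices_def)
      ultimately show "y \<in> ?A" using x y I by (auto simp: ppg_vertices_def)
    qed
  qed
  have adj: "\<forall>u\<in>?A. \<forall>v\<in>?A. ppg_adj u v \<longleftrightarrow> ppg_adj (map h u) (map h v)"
  proof (intro ballI)
    fix u v assume u: "u \<in> ?A" and v: "v \<in> ?A"
    have lu: "length u = d" "length v = d" using u v by (auto simp: ppg_vertices_def)
    have "{i. i < length u \<and> u ! i \<noteq> v ! i} = {i. i < length (map h u) \<and> map h u ! i \<noteq> map h v ! i}"
    proof (rule Collect_cong)
      fix i
      show "(i < length u \<and> u ! i \<noteq> v ! i) = (i < length (map h u) \<and> map h u ! i \<noteq> map h v ! i)"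
      proof (cases "i < length u")
        case True
        then have "u!i \<in> set u" "v!i \<in> set v" using lu by simp_all
        then have "u!i \<in> I" "v!i \<in> I" using u v by auto
        then have "h (u!i) = h (v!i) \<longleftrightarrow> u!i = v!i" using inj_on_eq_iff[OF injh] by blast
        then show ?thesis using True lu by simp
      qed simp
    qed
    then show "ppg_adj u v \<longleftrightarrow> ppg_adj (map h u) (map h v)" unfolding ppg_adj_def using lu by simp
  qed
  show ?thesis unfolding graph_iso_def using bij adj by blast
qed

lemma bip_part:
  assumes I: "I \<subseteq> {1..n}" and cI: "card I = d + 1"
  shows "bipartite {xs \<in> ppg_vertices d n. set xs \<subseteq> I} ppg_adj"
proof -
  let ?A = "{xs \<in> ppg_vertices d n. set xs \<subseteq> I}"
  have finI: "finite I" using I finite_subset by blast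
  obtain g where g: "bij_betw g {1..d+1} I" using ex_bij_betw_nat_finite_1[OF finI] cI by auto
  define h where "h = the_inv_into {1..d+1} g"
  have h: "bij_betw h I {1..d+1}" unfolding h_def by (rule bij_betw_the_inv_into[OF g])
  define m where "m u = (SOME x. x \<in> I - set u)" for u :: "nat list"
  have mI: "I - set u = {m u}" if u: "u \<in> ?A" for u
  proof -
    have su: "set u \<subseteq> I" "distinct u" "length u = d" using u by (auto simp: ppg_vertices_def)
    have c1: "card (set u) = d" using distinct_card[OF su(2)] su(3) by simp
    have "card (I - set u) = card I - card (set u)"
      by (rule card_Diff_subset[OF finite_subset[OF su(1) finI] su(1)])
    then have "card (I - set u) = Suc 0" using cI c1 by simp
    from card_1_singleton_iff[THEN iffD1, OF this] obtain x where x: "I - set u = {x}" ..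
    then have "m u \<in> I - set u" unfolding m_def by (metis singletonI someI_ex)
    then show ?thesis using x by auto
  qed
  define ys where "ys u = u @ [m u]" for u
  define p where "p u k = (if k < d+1 then h (ys u ! k) - 1 else k)" for u k
  have dec: "bij_betw (\<lambda>y::nat. y - 1) {1..d+1} {..<d+1}"
    by (rule bij_betw_byWitness[where f' = "\<lambda>y. y + 1"]) auto
  have perm: "p u permutes {..<d+1}" if u: "u \<in> ?A" for u
  proof (rule bij_imp_permutes)
    have su: "set u \<subseteq> I" "distinct u" "length u = d" using u by (auto simp: ppg_vertices_def)
    have mu: "m u \<in> I" "m u \<notin> set u" using mI[OF u] by auto
    have "bij_betw (nth (ys u)) {..<d+1} I"
      by (rule bij_betw_nth) (use su mu mI[OF u] in \<open>auto simp: ys_def\<close>)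
    then have "bij_betw ((\<lambda>y. y - 1) \<circ> h \<circ> nth (ys u)) {..<d+1} {..<d+1}"
      using bij_betw_trans h dec by blast
    moreover have "\<And>k. k \<in> {..<d+1} \<Longrightarrow> ((\<lambda>y. y - 1) \<circ> h \<circ> nth (ys u)) k = p u k"
      by (simp add: p_def)
    ultimately show "bij_betw (p u) {..<d+1} {..<d+1}" using bij_betw_cong by blast
    show "\<And>x. x \<notin> {..<d+1} \<Longrightarrow> p u x = x" by (simp add: p_def)
  qed
  have key: "v!i = m u" if u: "u \<in> ?A" and v: "v \<in> ?A" and i: "i < d" and ne: "u!i \<noteq> v!i"
    and ag: "\<forall>j<d. j \<noteq> i \<longrightarrow> u!j = v!j" for u v i
  proof -
    have su: "length u = d" "length v = d" "distinct v" "set v \<subseteq> I"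
      using u v by (auto simp: ppg_vertices_def)
    have "v!i \<in> set v" using su i by simp
    then have vi: "v!i \<in> I" using su by auto
    have "v!i \<notin> set u"
    proof
      assume "v!i \<in> set u"
      then obtain k where k: "k < d" "u!k = v!i" using su by (auto simp: in_set_conv_nth)
      show False
      proof (cases "k = i")
        case True then show False using k ne by simp
      next
        case False
        then have "v!k = v!i" using k ag by simp
        then show False using False k i su by (simp add: nth_eq_iff_index_eq)
      qed
    qed
    then show ?thesis using vi mI[OF u] by blast
  qed
  show ?thesis unfolding bipartite_def
  proof (intro exI[of _ "\<lambda>u. evenperm (p u)"] ballI impI)
    fix u v assume u: "u \<in> ?A" and v: "v \<in> ?A" and adj: "ppg_adj u v"
    have lu: "length u = d" "length v = d" using u v by (auto simp: ppg_vertices_def)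
    obtain i where i: "i < d" "u!i \<noteq> v!i" and ag: "\<forall>j<d. j \<noteq> i \<longrightarrow> u!j = v!j"
      using adj lu unfolding adj_iff by auto
    have ag': "\<forall>j<d. j \<noteq> i \<longrightarrow> v!j = u!j" using ag by simp
    have ne': "v!i \<noteq> u!i" using i by simp
    have k1: "v!i = m u" by (rule key[OF u v i(1) i(2) ag])
    have k2: "u!i = m v" by (rule key[OF v u i(1) ne' ag'])
    have "p v = p u \<circ> transpose i d"
    proof
      fix k
      show "p v k = (p u \<circ> transpose i d) k"
      proof (cases "k < d + 1")
        case False
        then show ?thesis using i by (auto simp: p_def transpose_def)
      next
        case True
        have "ys v ! k = ys u ! (transpose i d k)"
        proof -
          consider "k = i" | "k = d" | "k < d" "k \<noteq> i" using True by linarith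
          then show ?thesis
          proof cases
            case 1 then show ?thesis using i lu k1 by (simp add: ys_def transpose_def nth_append)
          next
            case 2 then show ?thesis using i lu k2 by (simp add: ys_def transpose_def nth_append)
          next
            case 3 then show ?thesis using i lu ag by (simp add: ys_def transpose_def nth_append)
          qed
        qed
        moreover have "transpose i d k < d + 1" using True i by (simp add: transpose_def)
        ultimately show ?thesis using True by (simp add: p_def)
      qed
    qed
    moreover have "permutation (p u)" using perm[OF u] permutes_imp_permutation by blast
    ultimately have "evenperm (p v) \<longleftrightarrow> evenperm (p u) = evenperm (transpose i d)"
      using evenperm_comp permutation_swap_id by metis
    moreover have "\<not> evenperm (transpose i d)" using i by (simp add: evenperm_swap)
    ultimately show "evenperm (p u) \<noteq> evenperm (p v)" by simp
  qed
qed

theorem mainTheorem6: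
  fixes d n :: nat and I :: "nat set"
  assumes "1 \<le> d" and "n \<ge> d + 2"
    and "I \<subseteq> {1..n}" and "card I = d + 1"
  defines "A \<equiv> {xs \<in> ppg_vertices d n. set xs \<subseteq> I}"
  shows "graph_iso A ppg_adj (ppg_vertices d (d + 1)) ppg_adj
         \<and> bipartite A ppg_adj
         \<and> (\<forall>K. is_maximal_clique (ppg_vertices d n) ppg_adj K \<longrightarrow> card (K \<inter> A) \<in> {0, 2})"
proof (intro conjI allI impI)
  show "graph_iso A ppg_adj (ppg_vertices d (d + 1)) ppg_adj"
    unfolding A_def by (rule iso_part[OF assms(3,4)])
  show "bipartite A ppg_adj"
    unfolding A_def by (rule bip_part[OF assms(3,4)])
  fix K assume K: "is_maximal_clique (ppg_vertices d n) ppg_adj K"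
  have "d \<le> n" using assms(2) by simp
  from maxclique_line[OF assms(1) this K] obtain v i where
    v: "v \<in> ppg_vertices d n" and i: "i < d" and Kl: "K = line d n v i" by blast
  show "card (K \<inter> A) \<in> {0, 2}"
    unfolding Kl A_def by (rule line_card[OF v i assms(1,3,4)])
qed

end
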